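(* Let $n\ge3$ be odd and $n-1<s\le n$. Then $$\max\{\operatorname{per}(I-A): A\in\tilde\omega_n^s\}=2^{(n-1)/2}.$$ The maximum is attained by $M_2\oplus\cdots\oplus M_2\oplus M_3$ with $(n-3)/2$ copies of $M_2=\begin{pmatrix}0&1\\1&0\end{pmatrix}$ and $M_3=\begin{pmatrix}0&1&0\\1&0&0\\0&s-(n-1)&0\end{pmatrix}$.
   Context: An $n\times n$ matrix is row substochastic if all entries are nonnegative and each row sum is at most $1$. $\sigma(A)$ is the sum of all entries of $A$, and $\tilde\omega_n^s$ is the set of $n\times n$ row substochastic matrices $A$ with $\sigma(A)=s$. $\oplus$ is block-diagonal direct sum. The permanent is $\operatorname{per}(M)=\sum_{\pi\in S_n}\prod_i m_{i\pi(i)}$, and $I$ is the identity matrix. *)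

theory Defs
  imports "HOL-Combinatorics.Permutations" Complex_Main
begin

text \<open>An n x n real matrix is represented as a function nat => nat => real,
  with entries indexed by {..<n}; entries outside are required to be 0 where relevant.\<close>

definition per :: "nat \<Rightarrow> (nat \<Rightarrow> nat \<Rightarrow> real) \<Rightarrow> real" where
  "per n M = (\<Sum>p\<in>{p. p permutes {..<n}}. \<Prod>i<n. M i (p i))"

definition idm :: "nat \<Rightarrow> nat \<Rightarrow> real" where
  "idm i j = (if i = j then 1 else 0)"

definition mat_minus :: "(nat \<Rightarrow> nat \<Rightarrow> real) \<Rightarrow> (nat \<Rightarrow> nat \<Rightarrow> real) \<Rightarrow> nat \<Rightarrow> nat \<Rightarrow> real" where
  "mat_minus A B i j = A i j - B i j"

definition sigma_sum :: "nat \<Rightarrow> (nat \<Rightarrow> nat \<Rightarrow> real) \<Rightarrow> real" where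
  "sigma_sum n A = (\<Sum>i<n. \<Sum>j<n. A i j)"

definition row_substochastic :: "nat \<Rightarrow> (nat \<Rightarrow> nat \<Rightarrow> real) \<Rightarrow> bool" where
  "row_substochastic n A \<longleftrightarrow> (\<forall>i<n. \<forall>j<n. 0 \<le> A i j) \<and> (\<forall>i<n. (\<Sum>j<n. A i j) \<le> 1)"

definition substoch_set :: "nat \<Rightarrow> real \<Rightarrow> (nat \<Rightarrow> nat \<Rightarrow> real) set" where
  "substoch_set n s = {A. (\<forall>i j. (n \<le> i \<or> n \<le> j) \<longrightarrow> A i j = 0)
      \<and> row_substochastic n A \<and> sigma_sum n A = s}"

definition dsum :: "nat \<Rightarrow> (nat \<Rightarrow> nat \<Rightarrow> real) \<Rightarrow> nat \<Rightarrow> (nat \<Rightarrow> nat \<Rightarrow> real) \<Rightarrow> nat \<Rightarrow> nat \<Rightarrow> real" where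
  "dsum p A q B i j =
     (if i < p \<and> j < p then A i j
      else if p \<le> i \<and> i < p + q \<and> p \<le> j \<and> j < p + q then B (i - p) (j - p)
      else 0)"

definition M2 :: "nat \<Rightarrow> nat \<Rightarrow> real" where
  "M2 i j = (if (i = 0 \<and> j = 1) \<or> (i = 1 \<and> j = 0) then 1 else 0)"

definition M3 :: "nat \<Rightarrow> real \<Rightarrow> nat \<Rightarrow> nat \<Rightarrow> real" where
  "M3 n s i j = (if (i = 0 \<and> j = 1) \<or> (i = 1 \<and> j = 0) then 1
                 else if i = 2 \<and> j = 1 then s - (real n - 1) else 0)"

fun M2_copies :: "nat \<Rightarrow> nat \<Rightarrow> nat \<Rightarrow> real" where
  "M2_copies 0 = (\<lambda>i j. 0)"
| "M2_copies (Suc k) = dsum 2 M2 (2 * k) (M2_copies k)"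

definition extremal :: "nat \<Rightarrow> real \<Rightarrow> nat \<Rightarrow> nat \<Rightarrow> real" where
  "extremal n s = dsum (n - 3) (M2_copies ((n - 3) div 2)) 3 (M3 n s)"

end

theory Submission
  imports Defs "HOL-Library.FuncSet"
begin

definition Pf :: "(nat \<Rightarrow> nat) \<Rightarrow> nat set \<Rightarrow> (nat \<Rightarrow> nat) set" where
  "Pf f X = {p. p permutes X \<and> (\<forall>i\<in>X. p i = i \<or> p i = f i)}"

lemma finite_Pf: "finite X \<Longrightarrow> finite (Pf f X)"
  by (rule finite_subset[OF _ finite_permutations[of X]]) (auto simp: Pf_def)

lemma card_Pf: "finite X \<Longrightarrow> card (Pf f X) \<le> 2 ^ (card X div 2)"
proof (induction "card X" arbitrary: X rule: less_induct)
  case less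
  show ?case
  proof (cases "\<exists>p\<in>Pf f X. \<exists>x. p x \<noteq> x")
    case False
    hence "Pf f X \<subseteq> {id}" by (auto simp: fun_eq_iff)
    hence "card (Pf f X) \<le> 1" using card_mono[of "{id}" "Pf f X"] by auto
    thus ?thesis by (meson le_trans one_le_power one_le_numeral)
  next
    case True
    then obtain p0 x where p0: "p0 \<in> Pf f X" and x: "p0 x \<noteq> x" by blast
    have p0p: "p0 permutes X" and p0f: "\<And>i. i \<in> X \<Longrightarrow> p0 i = i \<or> p0 i = f i"
      using p0 by (auto simp: Pf_def)
    define M where "M = {z\<in>X. p0 z \<noteq> z}"
    define S where "S = {C. C \<noteq> {} \<and> C \<subseteq> M \<and> f ` C \<subseteq> C}"
    have xX: "x \<in> X" using x permutes_not_in[OF p0p] by blast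
    have "M \<in> S"
    proof -
      have "x \<in> M" using xX x by (auto simp: M_def)
      moreover have "f ` M \<subseteq> M"
      proof
        fix y assume "y \<in> f ` M"
        then obtain z where z: "z \<in> M" "y = f z" by blast
        have "p0 z = f z" using z p0f by (auto simp: M_def)
        moreover have "p0 (p0 z) \<noteq> p0 z" using z permutes_inj[OF p0p] by (auto simp: M_def inj_eq)
        moreover have "p0 z \<in> X" using z permutes_in_image[OF p0p] by (auto simp: M_def)
        ultimately show "y \<in> M" using z by (auto simp: M_def)
      qed
      ultimately show ?thesis by (auto simp: S_def M_def)
    qed
    then obtain C where CS: "C \<in> S" and Cmin: "\<And>C'. C' \<in> S \<Longrightarrow> card C \<le> card C'"
      using ex_has_least_nat[of "\<lambda>C. C \<in> S" M card] by blast
    have CM: "C \<subseteq> M" and Cne: "C \<noteq> {}" and fC: "f ` C \<subseteq> C" using CS by (auto simp: S_def)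
    have CX: "C \<subseteq> X" using CM by (auto simp: M_def)
    have finC: "finite C" using CX less.prems finite_subset by blast
    have key: "(\<forall>z\<in>C. p z = z) \<or> (\<forall>z\<in>C. p z = f z)" if pP: "p \<in> Pf f X" for p
    proof -
      have pp: "p permutes X" and pf: "\<And>i. i \<in> X \<Longrightarrow> p i = i \<or> p i = f i"
        using pP by (auto simp: Pf_def)
      define D where "D = C \<inter> {z. p z \<noteq> z}"
      show ?thesis
      proof (cases "D = {}")
        case True thus ?thesis by (auto simp: D_def)
      next
        case False
        have "f ` D \<subseteq> D"
        proof
          fix y assume "y \<in> f ` D"
          then obtain z where z: "z \<in> D" "y = f z" by blast
          have zX: "z \<in> X" using z CX by (auto simp: D_def)
          have pz: "p z = f z" using z pf[OF zX] by (auto simp: D_def)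
          have "f z \<noteq> z" using z CM p0f[OF zX] by (auto simp: D_def M_def)
          hence "p (f z) \<noteq> f z" using pz permutes_inj[OF pp] by (metis injD)
          thus "y \<in> D" using z fC by (auto simp: D_def)
        qed
        hence "D \<in> S" using False CM by (auto simp: S_def D_def)
        hence "card C \<le> card D" by (rule Cmin)
        hence "D = C" using card_subset_eq[OF finC, of D] by (auto simp: D_def intro: antisym card_mono[OF finC])
        thus ?thesis using pf CX by (auto simp: D_def)
      qed
    qed
    have card2: "2 \<le> card C"
    proof -
      obtain c where c: "c \<in> C" using Cne by blast
      have "f c \<in> C" using c fC by blast
      moreover have "f c \<noteq> c" using c CM p0f[of c] by (auto simp: M_def)
      ultimately have "{c, f c} \<subseteq> C" using c by blast
      from card_mono[OF finC this] show ?thesis using \<open>f c \<noteq> c\<close> by auto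
    qed
    have imC: "p ` C = C" if pP: "p \<in> Pf f X" for p
    proof -
      have pp: "p permutes X" using pP by (auto simp: Pf_def)
      have "p ` C \<subseteq> C" using key[OF pP] fC by auto
      moreover have "card (p ` C) = card C"
        using card_image permutes_inj[OF pp] inj_on_subset by blast
      ultimately show ?thesis using card_subset_eq[OF finC] by blast
    qed
    define r where "r p = (\<lambda>z. if z \<in> C then z else p z)" for p :: "nat \<Rightarrow> nat"
    have rP: "r p \<in> Pf f (X - C)" if pP: "p \<in> Pf f X" for p
    proof -
      have pp: "p permutes X" and pf: "\<And>i. i \<in> X \<Longrightarrow> p i = i \<or> p i = f i"
        using pP by (auto simp: Pf_def)
      have injp: "inj p" using permutes_inj[OF pp] .
      have "p ` (X - C) = p ` X - p ` C" using injp by (simp add: image_set_diff)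
      also have "\<dots> = X - C" using imC[OF pP] permutes_image[OF pp] by simp
      finally have "bij_betw p (X - C) (X - C)" using injp inj_on_subset[of p UNIV "X - C"]
        by (auto simp: bij_betw_def)
      hence "bij_betw (r p) (X - C) (X - C)" by (rule bij_betw_cong[THEN iffD1, rotated]) (auto simp: r_def)
      moreover have "\<And>z. z \<notin> X - C \<Longrightarrow> r p z = z" using permutes_not_in[OF pp] by (auto simp: r_def)
      ultimately have "r p permutes (X - C)" by (rule bij_imp_permutes)
      thus ?thesis using pf by (auto simp: Pf_def r_def)
    qed
    define F where "F = (\<lambda>(b::bool, q::nat\<Rightarrow>nat). \<lambda>z. if z \<in> C then (if b then f z else z) else q z)"
    have "Pf f X \<subseteq> F ` ((UNIV::bool set) \<times> Pf f (X - C))"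
    proof
      fix p assume pP: "p \<in> Pf f X"
      show "p \<in> F ` ((UNIV::bool set) \<times> Pf f (X - C))"
      proof (cases "\<forall>z\<in>C. p z = f z")
        case True
        hence "p = F (True, r p)" by (auto simp: F_def r_def fun_eq_iff)
        thus ?thesis using rP[OF pP] by blast
      next
        case False
        hence "\<forall>z\<in>C. p z = z" using key[OF pP] by blast
        hence "p = F (False, r p)" by (auto simp: F_def r_def fun_eq_iff)
        thus ?thesis using rP[OF pP] by blast
      qed
    qed
    moreover have hfin: "finite ((UNIV::bool set) \<times> Pf f (X - C))"
      using finite_Pf[of "X - C" f] less.prems by auto
    ultimately have "card (Pf f X) \<le> card (F ` ((UNIV::bool set) \<times> Pf f (X - C)))"
      by (intro card_mono finite_imageI)
    also have "\<dots> \<le> card ((UNIV::bool set) \<times> Pf f (X - C))" by (rule card_image_le[OF hfin])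
    also have "\<dots> = 2 * card (Pf f (X - C))" by (simp add: card_cartesian_product)
    also have "\<dots> \<le> 2 * 2 ^ (card (X - C) div 2)"
    proof -
      have "card (X - C) < card X"
        using card2 CX less.prems card_Diff_subset[OF finC CX] card_mono[OF less.prems CX] by auto
      thus ?thesis using less.hyps[of "X - C"] less.prems by auto
    qed
    also have "\<dots> \<le> 2 ^ (card X div 2)"
    proof -
      have cc: "card (X - C) = card X - card C" using card_Diff_subset[OF finC CX] .
      have "card C \<le> card X" using card_mono[OF less.prems CX] .
      hence "Suc (card (X - C) div 2) \<le> card X div 2" using cc card2 by auto
      hence "2 ^ Suc (card (X - C) div 2) \<le> (2::nat) ^ (card X div 2)" by (rule power_increasing) auto
      thus ?thesis by simp
    qed
    finally show ?thesis .
  qed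
qed

lemma per_g_bound:
  fixes g :: "nat \<Rightarrow> nat"
  shows "(\<Sum>p\<in>{p. p permutes {..<n}}. \<Prod>i<n. idm i (p i) - idm (g i) (p i)) \<le> 2 ^ (n div 2)"
proof -
  let ?t = "\<lambda>p. \<Prod>i<n. idm i (p i) - idm (g i) (p i)"
  have "(\<Sum>p\<in>{p. p permutes {..<n}}. ?t p) \<le> (\<Sum>p\<in>{p. p permutes {..<n}}. if p \<in> Pf g {..<n} then 1 else 0)"
  proof (rule sum_mono)
    fix p assume "p \<in> {p. p permutes {..<n}}"
    hence pp: "p permutes {..<n}" by simp
    show "?t p \<le> (if p \<in> Pf g {..<n} then 1 else 0)"
    proof (cases "p \<in> Pf g {..<n}")
      case True
      have "?t p \<le> \<bar>?t p\<bar>" by simp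
      also have "\<dots> = (\<Prod>i<n. \<bar>idm i (p i) - idm (g i) (p i)\<bar>)" by (simp add: abs_prod)
      also have "\<dots> \<le> 1" by (rule prod_le_1) (auto simp: idm_def)
      finally show ?thesis using True by simp
    next
      case False
      then obtain i where "i < n" "p i \<noteq> i" "p i \<noteq> g i" using pp by (auto simp: Pf_def)
      hence z: "idm i (p i) - idm (g i) (p i) = 0" by (auto simp: idm_def)
      have t0: "?t p = 0" using \<open>i < n\<close> z by (metis (no_types) finite_lessThan lessThan_iff prod_zero)
      have "(if p \<in> Pf g {..<n} then 1 else 0) = (0::real)" using False by simp
      with t0 show ?thesis by linarith
    qed
  qed
  also have "\<dots> = real (card (Pf g {..<n}))"
  proof -
    have "{p \<in> {p. p permutes {..<n}}. p \<in> Pf g {..<n}} = Pf g {..<n}" by (auto simp: Pf_def)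
    thus ?thesis using sum.inter_filter[of "{p. p permutes {..<n}}" "\<lambda>_. 1::real" "\<lambda>p. p \<in> Pf g {..<n}", symmetric]
      by (simp add: finite_permutations)
  qed
  also have "\<dots> \<le> 2 ^ (n div 2)"
  proof -
    have "card (Pf g {..<n}) \<le> 2 ^ (n div 2)" using card_Pf[of "{..<n}" g] by simp
    hence "real (card (Pf g {..<n})) \<le> real (2 ^ (n div 2))" by (simp only: of_nat_le_iff)
    thus ?thesis by simp
  qed
  finally show ?thesis .
qed

lemma per_bound:
  assumes nn: "\<And>i j. i < n \<Longrightarrow> j < n \<Longrightarrow> 0 \<le> A i j"
    and rs: "\<And>i. i < n \<Longrightarrow> (\<Sum>j<n. A i j) \<le> 1"
  shows "per n (mat_minus idm A) \<le> 2 ^ (n div 2)"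
proof -
  define w where "w i k = (if k < n then A i k else 1 - (\<Sum>j<n. A i j))" for i k
  define v where "v i k j = idm i j - idm k j" for i k j :: nat
  have wsum: "(\<Sum>k\<le>n. w i k) = 1" for i
    by (simp add: atMost_Suc lessThan_Suc_atMost[symmetric] w_def)
  have w0: "0 \<le> w i k" if "i < n" for i k using nn[OF that] rs[OF that] by (auto simp: w_def)
  have dec: "mat_minus idm A i j = (\<Sum>k\<le>n. w i k * v i k j)" if "i < n" "j < n" for i j
  proof -
    have "(\<Sum>k\<le>n. w i k * v i k j) = idm i j * (\<Sum>k\<le>n. w i k) - (\<Sum>k\<le>n. w i k * idm k j)"
      by (simp add: v_def algebra_simps sum_subtractf sum_distrib_left)
    also have "(\<Sum>k\<le>n. w i k * idm k j) = w i j"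
      using that by (simp add: idm_def if_distrib[of "\<lambda>x. w i _ * x"] sum.delta' cong: if_cong)
    finally show ?thesis using that wsum by (simp add: mat_minus_def w_def)
  qed
  let ?G = "PiE {..<n} (\<lambda>_. {..n})"
  let ?P = "{p. p permutes {..<n}}"
  have pin: "\<And>p i. p permutes {..<n} \<Longrightarrow> i < n \<Longrightarrow> p i < n"
    by (metis lessThan_iff permutes_in_image)
  have "per n (mat_minus idm A) = (\<Sum>p\<in>?P. \<Prod>i<n. \<Sum>k\<le>n. w i k * v i k (p i))"
    unfolding per_def
    by (intro sum.cong prod.cong refl dec) (auto simp: pin)
  also have "\<dots> = (\<Sum>p\<in>?P. \<Sum>g\<in>?G. \<Prod>i<n. w i (g i) * v i (g i) (p i))"
    by (intro sum.cong refl prod_sum_PiE) auto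
  also have "\<dots> = (\<Sum>g\<in>?G. (\<Prod>i<n. w i (g i)) * (\<Sum>p\<in>?P. \<Prod>i<n. v i (g i) (p i)))"
    by (subst sum.swap) (simp add: prod.distrib sum_distrib_left)
  also have "\<dots> \<le> (\<Sum>g\<in>?G. (\<Prod>i<n. w i (g i)) * 2 ^ (n div 2))"
    by (intro sum_mono mult_left_mono prod_nonneg) (auto simp: w0 v_def per_g_bound)
  also have "\<dots> = (\<Prod>i<n. \<Sum>k\<le>n. w i k) * 2 ^ (n div 2)"
    by (subst prod_sum_PiE) (auto simp: sum_distrib_right)
  also have "\<dots> = 2 ^ (n div 2)" by (simp add: wsum)
  finally show ?thesis .
qed

definition partner :: "nat \<Rightarrow> nat" where "partner i = (if even i then Suc i else i - 1)"

lemma partner_lt: "i < 2*k \<Longrightarrow> partner i < 2*k"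
  by (auto simp: partner_def elim!: evenE)

lemma partner_ge2: "2 \<le> i \<Longrightarrow> 2 \<le> partner i"
  by (auto simp: partner_def elim!: oddE)

lemma partner_lt2: "i < 2 \<Longrightarrow> partner i < 2"
  by (auto simp: partner_def)

lemma partner_shift: "2 \<le> i \<Longrightarrow> partner i = partner (i - 2) + 2"
  by (auto simp: partner_def elim!: oddE)

lemma partner_inv: "partner (partner i) = i"
  by (auto simp: partner_def elim!: oddE)

lemma partner_neq: "partner i \<noteq> i"
  by (auto simp: partner_def elim!: oddE)

lemma M2_copies_closed: "M2_copies k i j = (if i < 2*k \<and> j = partner i then 1 else 0)"
proof (induction k arbitrary: i j)
  case 0 then show ?case by simp
next
  case (Suc k)
  show ?case
  proof (cases "i < 2 \<and> j < 2")
    case True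
    then consider "i = 0" "j = 0" | "i = 0" "j = 1" | "i = 1" "j = 0" | "i = 1" "j = 1" by linarith
    thus ?thesis by cases (auto simp: dsum_def M2_def partner_def)
  next
    case F1: False
    show ?thesis
    proof (cases "2 \<le> i \<and> i < 2 + 2*k \<and> 2 \<le> j \<and> j < 2 + 2*k")
      case True
      hence "dsum 2 M2 (2*k) (M2_copies k) i j = M2_copies k (i - 2) (j - 2)" using F1 by (simp add: dsum_def)
      also have "\<dots> = (if i - 2 < 2*k \<and> j - 2 = partner (i - 2) then 1 else 0)" by (rule Suc.IH)
      also have "\<dots> = (if i < 2*Suc k \<and> j = partner i then 1 else 0)"
        using True partner_shift[of i] by auto
      finally show ?thesis by simp
    next
      case False
      hence "dsum 2 M2 (2*k) (M2_copies k) i j = 0" using F1 by (auto simp: dsum_def)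
      moreover have "\<not> (i < 2*Suc k \<and> j = partner i)"
      proof
        assume a: "i < 2*Suc k \<and> j = partner i"
        show False
        proof (cases "i < 2")
          case True thus False using a F1 partner_lt2[of i] by auto
        next
          case False thus False using a F1 \<open>\<not> (2 \<le> i \<and> _)\<close> partner_ge2[of i] partner_lt[of i "Suc k"] by auto
        qed
      qed
      ultimately show ?thesis by simp
    qed
  qed
qed



lemma E_closed:
  "extremal (2*m+3) s i j = (if i < 2*m+2 \<and> j = partner i then 1
      else if i = 2*m+2 \<and> j = 2*m+1 then s - (real (2*m+3) - 1) else 0)"
proof -
  have e: "extremal (2*m+3) s = dsum (2*m) (M2_copies m) 3 (M3 (2*m+3) s)"
    by (simp add: extremal_def)
  have p0: "partner (2*m) = 2*m+1" and p1: "partner (2*m+1) = 2*m" "partner (Suc (2*m)) = 2*m" by (simp_all add: partner_def)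
  show ?thesis
  proof (cases "i < 2*m \<and> j < 2*m")
    case True thus ?thesis by (simp add: e dsum_def M2_copies_closed)
  next
    case F1: False
    show ?thesis
    proof (cases "2*m \<le> i \<and> i < 2*m+3 \<and> 2*m \<le> j \<and> j < 2*m+3")
      case True
      have ne: "\<not> (i < 2*m \<and> j < 2*m)" using F1 .
      have d: "extremal (2*m+3) s i j = M3 (2*m+3) s (i - 2*m) (j - 2*m)"
        using True ne by (simp add: e dsum_def)
      have "i = 2*m \<or> i = 2*m+1 \<or> i = 2*m+2" "j = 2*m \<or> j = 2*m+1 \<or> j = 2*m+2" using True by auto
      thus ?thesis unfolding d
        by (elim disjE) (simp_all add: M3_def p0 p1)
    next
      case False
      hence "extremal (2*m+3) s i j = 0" using F1 by (auto simp: e dsum_def)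
      moreover have "\<not> (i < 2*m+2 \<and> j = partner i)"
      proof
        assume a: "i < 2*m+2 \<and> j = partner i"
        show False
        proof (cases "i < 2*m")
          case True thus False using a F1 partner_lt[of i m] by auto
        next
          case c: False
          hence "i = 2*m \<or> i = 2*m+1" using a by linarith
          thus False using a False c p0 p1 by auto
        qed
      qed
      ultimately show ?thesis using False by auto
    qed
  qed
qed


lemma partner_div: "partner i div 2 = i div 2"
  by (auto simp: partner_def elim!: oddE)

lemma prod_pairs: "(\<Prod>i<2*k. f i) = (\<Prod>j<k. f (2*j) * f (2*j+1))"
  for f :: "nat \<Rightarrow> real"
  by (induction k) (simp_all add: mult.assoc)

lemma E_row:
  assumes "i < 2*m+3"
  shows "(\<Sum>j<2*m+3. extremal (2*m+3) s i j) = (if i < 2*m+2 then 1 else s - (real (2*m+3) - 1))"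
proof (cases "i < 2*m+2")
  case True
  have "partner i < 2*m+3" using partner_lt[of i "m+1"] True by simp
  moreover have "(\<Sum>j<2*m+3. extremal (2*m+3) s i j) = (\<Sum>j<2*m+3. if j = partner i then 1 else 0)"
    using True by (intro sum.cong refl) (simp add: E_closed)
  ultimately show ?thesis using True by (simp add: sum.delta')
next
  case False
  hence "i = 2*m+2" using assms by simp
  thus ?thesis by (simp add: E_closed sum.delta' cong: if_cong)
qed

lemma E_in:
  assumes "real (2*m+3) - 1 < s" "s \<le> real (2*m+3)"
  shows "extremal (2*m+3) s \<in> substoch_set (2*m+3) s"
proof -
  let ?E = "extremal (2*m+3) s"
  have z: "?E i j = 0" if "2*m+3 \<le> i \<or> 2*m+3 \<le> j" for i j
    using that partner_lt[of i "m+1"] by (auto simp: E_closed)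
  have nn: "0 \<le> ?E i j" for i j using assms by (simp add: E_closed)
  have rs: "(\<Sum>j<2*m+3. ?E i j) \<le> 1" if "i < 2*m+3" for i
    using E_row[OF that, of s] assms by simp
  have "sigma_sum (2*m+3) ?E = (\<Sum>i<2*m+3. (if i < 2*m+2 then 1 else s - (real (2*m+3) - 1)))"
    unfolding sigma_sum_def by (intro sum.cong refl E_row) simp
  also have "\<dots> = (\<Sum>i<2*m+2. (if i < 2*m+2 then 1 else s - (real (2*m+3) - 1))) + (s - (real (2*m+3) - 1))"
    by (simp add: numeral_3_eq_3)
  also have "\<dots> = s" by simp
  finally show ?thesis using z nn rs by (auto simp: substoch_set_def row_substochastic_def)
qed


lemma h1: "i < 2*m+2 \<Longrightarrow> mat_minus idm (extremal (2*m+3) s) i a =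
   (if a = i then 1 else if a = partner i then -1 else 0)"
  using partner_neq[of i] by (auto simp: mat_minus_def idm_def E_closed)

lemma h2: "mat_minus idm (extremal (2*m+3) s) (2*m+2) a =
   (if a = 2*m+2 then 1 else if a = 2*m+1 then - (s - (real (2*m+3) - 1)) else 0)"
  by (auto simp: mat_minus_def idm_def E_closed)

lemma pe0: "partner (2*j) = 2*j+1" and pe1: "partner (2*j+1) = 2*j" and pe1': "partner (Suc (2*j)) = 2*j"
  by (simp_all add: partner_def)

lemma t_split:
  "(\<Prod>i<2*m+3. f i) = (\<Prod>j<m. f (2*j) * f (2*j+1)) * (f (2*m) * f (2*m+1) * f (2*m+2))"
  for f :: "nat \<Rightarrow> real"
proof -
  have "(\<Prod>i<2*m+3. f i) = (\<Prod>i<2*m. f i) * f (2*m) * f (2*m+1) * f (2*m+2)"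
    by (simp add: numeral_3_eq_3 mult.assoc)
  thus ?thesis by (simp add: prod_pairs mult.assoc)
qed

lemma pair_nn:
  assumes "j \<le> m" "a \<noteq> b"
  shows "0 \<le> mat_minus idm (extremal (2*m+3) s) (2*j) a * mat_minus idm (extremal (2*m+3) s) (2*j+1) b"
  using assms by (simp add: h1 pe0 pe1 pe1')

lemma triple_nn:
  assumes "a \<noteq> b" "a \<noteq> d" "b \<noteq> d" "real (2*m+3) - 1 < s"
  shows "0 \<le> mat_minus idm (extremal (2*m+3) s) (2*m) a * mat_minus idm (extremal (2*m+3) s) (2*m+1) b
      * mat_minus idm (extremal (2*m+3) s) (2*m+2) d"
proof -
  let ?h = "mat_minus idm (extremal (2*m+3) s)"
  have hm: "?h (2*m) x = (if x = 2*m then 1 else if x = 2*m+1 then -1 else 0)" for x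
    using h1[of "2*m" m s x] by (simp add: pe0)
  have hm1: "?h (2*m+1) x = (if x = 2*m+1 then 1 else if x = 2*m then -1 else 0)" for x
    using h1[of "2*m+1" m s x] by (simp add: pe1 pe1')
  show ?thesis using assms unfolding hm hm1 h2 by auto
qed


lemma per_E_ge:
  assumes cs: "real (2*m+3) - 1 < s"
  shows "2 ^ (m+1) \<le> per (2*m+3) (mat_minus idm (extremal (2*m+3) s))"
proof -
  let ?n = "2*m+3"
  let ?h = "mat_minus idm (extremal (2*m+3) s)"
  let ?t = "\<lambda>p. \<Prod>i<?n. ?h i (p i)"
  let ?P = "{p. p permutes {..<?n}}"
  have tnn: "0 \<le> ?t p" if "p \<in> ?P" for p
  proof -
    have inj: "inj p" using that permutes_inj by auto
    have "0 \<le> (\<Prod>j<m. ?h (2*j) (p (2*j)) * ?h (2*j+1) (p (2*j+1)))"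
      by (intro prod_nonneg ballI pair_nn) (auto simp: inj_eq[OF inj])
    moreover have "0 \<le> ?h (2*m) (p (2*m)) * ?h (2*m+1) (p (2*m+1)) * ?h (2*m+2) (p (2*m+2))"
      by (rule triple_nn[OF _ _ _ cs]) (auto simp: inj_eq[OF inj])
    ultimately show ?thesis by (subst t_split) simp
  qed
  define q where "q S i = (if i < 2*m+2 \<and> i div 2 \<in> S then partner i else i)" for S :: "nat set" and i
  have qq: "q S (q S i) = i" for S i
    using partner_lt[of i "m+1"] by (auto simp: q_def partner_div partner_inv)
  have qlt: "q S i < ?n \<longleftrightarrow> i < ?n" for S i
    using partner_lt[of i "m+1"] by (auto simp: q_def)
  have qperm: "q S \<in> ?P" for S
  proof -
    have "bij_betw (q S) {..<?n} {..<?n}"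
      by (rule bij_betw_byWitness[where f' = "q S"]) (auto simp: qq qlt)
    moreover have "\<And>x. x \<notin> {..<?n} \<Longrightarrow> q S x = x" by (auto simp: q_def)
    ultimately show ?thesis by (auto intro: bij_imp_permutes)
  qed
  have q2j: "q S (2*j) = (if j \<in> S then 2*j+1 else 2*j)" if "j \<le> m" for S j
    using that by (auto simp: q_def pe0)
  have q2j1: "q S (2*j+1) = (if j \<in> S then 2*j else 2*j+1)" if "j \<le> m" for S j
    using that by (auto simp: q_def pe1 pe1')
  have q2j1': "q S (Suc (2*j)) = (if j \<in> S then 2*j else 2*j+1)" if "j \<le> m" for S j
    using q2j1[OF that] by simp
  have tq: "?t (q S) = 1" for S
  proof -
    have "?t (q S) = (\<Prod>j<m. ?h (2*j) (q S (2*j)) * ?h (2*j+1) (q S (2*j+1))) *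
        (?h (2*m) (q S (2*m)) * ?h (2*m+1) (q S (2*m+1)) * ?h (2*m+2) (q S (2*m+2)))"
      by (rule t_split)
    also have "(\<Prod>j<m. ?h (2*j) (q S (2*j)) * ?h (2*j+1) (q S (2*j+1))) = 1"
      by (intro prod.neutral ballI) (simp add: q2j q2j1 q2j1' h1 pe0 pe1 pe1')
    also have "?h (2*m) (q S (2*m)) * ?h (2*m+1) (q S (2*m+1)) * ?h (2*m+2) (q S (2*m+2)) = 1"
    proof -
      have "q S (2*m+2) = 2*m+2" by (simp add: q_def)
      moreover have "?h (2*m+2) (2*m+2) = 1" using h2[of m s "2*m+2"] by simp
      ultimately show ?thesis by (simp add: q2j q2j1 q2j1' h1 h2 pe0 pe1 pe1')
    qed
    finally show ?thesis by simp
  qed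
  have injq: "inj_on q (Pow {..<m+1})"
  proof (rule inj_onI)
    fix S T assume S: "S \<in> Pow {..<m+1}" and T: "T \<in> Pow {..<m+1}" and e: "q S = q T"
    show "S = T"
    proof (intro set_eqI iffI)
      fix j assume "j \<in> S" hence "j \<le> m" using S by auto
      hence "q T (2*j) \<noteq> 2*j" using e q2j[of j S] \<open>j \<in> S\<close> by auto
      thus "j \<in> T" using q2j[OF \<open>j \<le> m\<close>, of T] by (auto split: if_splits)
    next
      fix j assume "j \<in> T" hence "j \<le> m" using T by auto
      hence "q S (2*j) \<noteq> 2*j" using e q2j[of j T] \<open>j \<in> T\<close> by auto
      thus "j \<in> S" using q2j[OF \<open>j \<le> m\<close>, of S] by (auto split: if_splits)
    qed
  qed
  have "(2::real) ^ (m+1) = real (card (q ` Pow {..<m+1}))"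
    using card_image[OF injq] by (simp add: card_Pow)
  also have "\<dots> = (\<Sum>p\<in>q ` Pow {..<m+1}. ?t p)"
  proof -
    have "(\<Sum>p\<in>q ` Pow {..<m+1}. ?t p) = (\<Sum>p\<in>q ` Pow {..<m+1}. 1)"
      by (rule sum.cong) (auto simp: tq)
    thus ?thesis by simp
  qed
  also have "\<dots> \<le> (\<Sum>p\<in>?P. ?t p)"
    using qperm by (intro sum_mono2) (auto simp: finite_permutations tnn)
  also have "\<dots> = per ?n ?h" by (simp add: per_def)
  finally show ?thesis .
qed


theorem mainTheorem15:
  fixes n :: nat and s :: real
  assumes "odd n" and "n \<ge> 3" and "real n - 1 < s" and "s \<le> real n"
  shows "(\<forall>A\<in>substoch_set n s. per n (mat_minus idm A) \<le> 2 ^ ((n - 1) div 2))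
       \<and> extremal n s \<in> substoch_set n s
       \<and> per n (mat_minus idm (extremal n s)) = 2 ^ ((n - 1) div 2)"
proof -
  obtain k where k: "n = 2*k+1" using assms(1) oddE by blast
  define m where "m = k - 1"
  have nm: "n = 2*m+3" using k assms(2) by (simp add: m_def)
  have d1: "(n - 1) div 2 = m + 1" and d2: "n div 2 = m + 1" using nm by simp_all
  have A: "per n (mat_minus idm A) \<le> 2 ^ ((n - 1) div 2)" if "A \<in> substoch_set n s" for A
    using that unfolding d1 d2[symmetric]
    by (intro per_bound) (auto simp: substoch_set_def row_substochastic_def)
  have Ein: "extremal n s \<in> substoch_set n s" using E_in[of m s] assms(3,4) nm by simp
  have "per n (mat_minus idm (extremal n s)) = 2 ^ ((n - 1) div 2)"
  proof (rule antisym)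
    show "per n (mat_minus idm (extremal n s)) \<le> 2 ^ ((n - 1) div 2)" by (rule A[OF Ein])
    show "2 ^ ((n - 1) div 2) \<le> per n (mat_minus idm (extremal n s))"
      using per_E_ge[of m s] assms(3) nm d1 by simp
  qed
  thus ?thesis using A Ein by blast
qed

end
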